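(* Let $\Lambda$ be a row-finite $k$-graph with no sources, and let $\{t_\lambda\}_{\lambda\in\Lambda}$ be a permutative representation of $C^*(\Lambda)$ on $\mathcal H$ with permuted orthonormal basis $\{e_i\}_{i\in I}$, bijections $\tilde\sigma_\lambda:J_\lambda\to K_\lambda$, coding maps $\tilde\sigma^n:I\to I$, and encoding map $E:I\to\Lambda^\infty$. If $E$ is injective, then, setting $\Omega:=E(I)\subseteq\Lambda^\infty$, we have $E^{-1}\circ\sigma_\lambda\circ E(i)=\tilde\sigma_\lambda(i)$ for all $\lambda\in\Lambda$ and $i\in J_\lambda$, and $E^{-1}\circ\sigma^n\circ E(i)=\tilde\sigma^n(i)$ for all $n\in\mathbb N^k$ and $i\in I$; i.e. $I$ is identified with $\Omega$ and the maps $\tilde\sigma_\lambda,\tilde\sigma^n$ with the prefixing and shift maps restricted to $\Omega$.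
   Context: A $k$-graph ($k\ge1$) is a countable small category $\Lambda$ with a functor $d:\Lambda\to\mathbb N^k$ satisfying unique factorization: if $d(\lambda)=m+n$ there are unique $\mu,\nu$ with $\lambda=\mu\nu$, $d(\mu)=m$, $d(\nu)=n$. $\Lambda^0$ = vertices, $r,s$ = range, source, $\Lambda^n=d^{-1}(n)$, $v\Lambda^n=\{\lambda\in\Lambda^n:r(\lambda)=v\}$, $s(\lambda)\Lambda=\{\nu:r(\nu)=s(\lambda)\}$; row-finite: each $v\Lambda^n$ finite; no sources: each $v\Lambda^n$ nonempty. Infinite paths are degree-preserving functors $x:\Omega_k\to\Lambda$, where $\Omega_k$ has objects $\mathbb N^k$, morphisms $(p,q)$, $p\le q$, $d(p,q)=q-p$; $\Lambda^\infty$ is their set, $r(x)=x(0,0)$. Shift: $\sigma^m(x)(p,q)=x(p+m,q+m)$. Prefixing: for $r(x)=s(\lambda)$, $\sigma_\lambda(x)$ is the unique $y$ with $y(0,d(\lambda))=\lambda$, $\sigma^{d(\lambda)}(y)=x$. A representation of $C^*(\Lambda)$ is a family of partial isometries $\{t_\lambda\}$ satisfying (CK1)–(CK4): $\{t_v\}$ mutually orthogonal projections; $t_\lambda t_\eta=t_{\lambda\eta}$ when $s(\lambda)=r(\eta)$; $t_\lambda^*t_\lambda=t_{s(\lambda)}$; $t_v=\sum_{\lambda\in v\Lambda^n}t_\lambda t_\lambda^*$. It is permutative if there is an orthonormal basis $\{e_i\}_{i\in I}$ and, for each $\lambda$, sets $J_\lambda,K_\lambda\subseteq I$ and a bijection $\tilde\sigma_\lambda:J_\lambda\to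 K_\lambda$ with: (a) $\bigcup_{\lambda\in\Lambda^n}J_\lambda=\bigcup_{\lambda\in\Lambda^n}K_\lambda=I$ for each $n$; (b) $K_\nu\subseteq J_\lambda$ and $\tilde\sigma_\lambda\circ\tilde\sigma_\nu=\tilde\sigma_{\lambda\nu}$ for $\nu\in s(\lambda)\Lambda$; (c) $t_\lambda e_i=e_{\tilde\sigma_\lambda(i)}$ for $i\in J_\lambda$, $0$ otherwise; (d) $t_\lambda^*e_{\tilde\sigma_\lambda(i)}=e_i$ for $i\in J_\lambda$, and $t_\lambda^*e_j=0$ for $j\in K_{\lambda'}$, $\lambda'\ne\lambda$, $d(\lambda')=d(\lambda)$. Then for each $n$ the $K_\lambda$, $\lambda\in\Lambda^n$, partition $I$; the encoding map $E:I\to\Lambda^\infty$ is given by $E(i)(0,n)=$ the unique $\lambda\in\Lambda^n$ with $i\in K_\lambda$; and the coding map $\tilde\sigma^n:I\to I$ sends $i\in K_\lambda$ ($\lambda\in\Lambda^n$) to the unique $i_n\in J_\lambda$ with $\tilde\sigma_\lambda(i_n)=i$. *)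

theory Defs
  imports Complex_Main "HOL-Library.Countable_Set"
begin

text \<open>A k-graph is encoded by: a set of objects V, a set of morphisms L, range and
source maps r s, identities ident, (partial) composition cmp (meaningful when
s lam = r mu), and degree functor d into N^k, where N^k is represented as
functions 'k => nat for a finite nonempty type 'k (so k = CARD('k) >= 1).
The order on N^k is the pointwise order (le_fun).\<close>

definition kgraph ::
  "'v set \<Rightarrow> 'a set \<Rightarrow> ('a \<Rightarrow> 'v) \<Rightarrow> ('a \<Rightarrow> 'v) \<Rightarrow> ('v \<Rightarrow> 'a)
   \<Rightarrow> ('a \<Rightarrow> 'a \<Rightarrow> 'a) \<Rightarrow> ('a \<Rightarrow> ('k::finite \<Rightarrow> nat)) \<Rightarrow> bool" where
  "kgraph V L r s ident cmp d \<longleftrightarrow>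
     countable V \<and> countable L \<and>
     (\<forall>lam\<in>L. r lam \<in> V \<and> s lam \<in> V) \<and>
     (\<forall>v\<in>V. ident v \<in> L \<and> r (ident v) = v \<and> s (ident v) = v) \<and>
     (\<forall>lam\<in>L. cmp (ident (r lam)) lam = lam \<and> cmp lam (ident (s lam)) = lam) \<and>
     (\<forall>lam\<in>L. \<forall>mu\<in>L. s lam = r mu \<longrightarrow>
         cmp lam mu \<in> L \<and> r (cmp lam mu) = r lam \<and> s (cmp lam mu) = s mu) \<and>
     (\<forall>lam\<in>L. \<forall>mu\<in>L. \<forall>nu\<in>L. s lam = r mu \<and> s mu = r nu \<longrightarrow>
         cmp (cmp lam mu) nu = cmp lam (cmp mu nu)) \<and>
     (\<forall>v\<in>V. d (ident v) = (\<lambda>_. 0)) \<and>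
     (\<forall>lam\<in>L. \<forall>mu\<in>L. s lam = r mu \<longrightarrow> d (cmp lam mu) = (\<lambda>j. d lam j + d mu j)) \<and>
     (\<forall>lam\<in>L. \<forall>m n. d lam = (\<lambda>j. m j + n j) \<longrightarrow>
         (\<exists>mu nu. mu \<in> L \<and> nu \<in> L \<and> s mu = r nu \<and> lam = cmp mu nu \<and> d mu = m \<and> d nu = n \<and>
            (\<forall>mu' nu'. mu' \<in> L \<and> nu' \<in> L \<and> s mu' = r nu' \<and> lam = cmp mu' nu' \<and>
                 d mu' = m \<and> d nu' = n \<longrightarrow> mu' = mu \<and> nu' = nu)))"

definition row_finite ::
  "'v set \<Rightarrow> 'a set \<Rightarrow> ('a \<Rightarrow> 'v) \<Rightarrow> ('a \<Rightarrow> ('k::finite \<Rightarrow> nat)) \<Rightarrow> bool" where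
  "row_finite V L r d \<longleftrightarrow> (\<forall>v\<in>V. \<forall>n. finite {lam\<in>L. r lam = v \<and> d lam = n})"

definition no_sources ::
  "'v set \<Rightarrow> 'a set \<Rightarrow> ('a \<Rightarrow> 'v) \<Rightarrow> ('a \<Rightarrow> ('k::finite \<Rightarrow> nat)) \<Rightarrow> bool" where
  "no_sources V L r d \<longleftrightarrow> (\<forall>v\<in>V. \<forall>n. {lam\<in>L. r lam = v \<and> d lam = n} \<noteq> {})"

text \<open>Infinite paths: degree preserving functors Omega_k -> Lambda, given by their
action x p q on the morphisms (p,q), p <= q, of Omega_k (object p goes to the
vertex r (x p p)). Outside the domain p <= q the value is fixed to undefined,
so that equality of paths is equality of functors.\<close>

definition inf_paths ::
  "'a set \<Rightarrow> ('a \<Rightarrow> 'v) \<Rightarrow> ('a \<Rightarrow> 'v) \<Rightarrow> ('v \<Rightarrow> 'a) \<Rightarrow> ('a \<Rightarrow> 'a \<Rightarrow> 'a)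
   \<Rightarrow> ('a \<Rightarrow> ('k::finite \<Rightarrow> nat)) \<Rightarrow> (('k \<Rightarrow> nat) \<Rightarrow> ('k \<Rightarrow> nat) \<Rightarrow> 'a) set" where
  "inf_paths L r s ident cmp d =
    {x. (\<forall>p q. p \<le> q \<longrightarrow> x p q \<in> L \<and> d (x p q) = (\<lambda>j. q j - p j)) \<and>
        (\<forall>p. x p p = ident (r (x p p))) \<and>
        (\<forall>p q w. p \<le> q \<and> q \<le> w \<longrightarrow> s (x p q) = r (x q w) \<and> x p w = cmp (x p q) (x q w)) \<and>
        (\<forall>p q. \<not> p \<le> q \<longrightarrow> x p q = undefined)}"

definition path_shift ::
  "('k::finite \<Rightarrow> nat) \<Rightarrow> (('k \<Rightarrow> nat) \<Rightarrow> ('k \<Rightarrow> nat) \<Rightarrow> 'a) \<Rightarrow> (('k \<Rightarrow> nat) \<Rightarrow> ('k \<Rightarrow> nat) \<Rightarrow> 'a)" where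
  "path_shift m x = (\<lambda>p q. if p \<le> q then x (\<lambda>j. p j + m j) (\<lambda>j. q j + m j) else undefined)"

definition path_prefix ::
  "'a set \<Rightarrow> ('a \<Rightarrow> 'v) \<Rightarrow> ('a \<Rightarrow> 'v) \<Rightarrow> ('v \<Rightarrow> 'a) \<Rightarrow> ('a \<Rightarrow> 'a \<Rightarrow> 'a)
   \<Rightarrow> ('a \<Rightarrow> ('k::finite \<Rightarrow> nat)) \<Rightarrow> 'a \<Rightarrow> (('k \<Rightarrow> nat) \<Rightarrow> ('k \<Rightarrow> nat) \<Rightarrow> 'a)
   \<Rightarrow> (('k \<Rightarrow> nat) \<Rightarrow> ('k \<Rightarrow> nat) \<Rightarrow> 'a)" where
  "path_prefix L r s ident cmp d lam x =
    (THE y. y \<in> inf_paths L r s ident cmp d \<and> y (\<lambda>_. 0) (d lam) = lam \<and> path_shift (d lam) y = x)"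

definition hnorm :: "('h \<Rightarrow> 'h \<Rightarrow> complex) \<Rightarrow> 'h \<Rightarrow> real" where
  "hnorm ip x = sqrt (Re (ip x x))"

definition complex_hilbert_space ::
  "(complex \<Rightarrow> 'h::ab_group_add \<Rightarrow> 'h) \<Rightarrow> ('h \<Rightarrow> 'h \<Rightarrow> complex) \<Rightarrow> bool" where
  "complex_hilbert_space sc ip \<longleftrightarrow>
     (\<forall>a x y. sc a (x + y) = sc a x + sc a y) \<and>
     (\<forall>a b x. sc (a + b) x = sc a x + sc b x) \<and>
     (\<forall>a b x. sc a (sc b x) = sc (a * b) x) \<and>
     (\<forall>x. sc 1 x = x) \<and>
     (\<forall>x y z. ip (x + y) z = ip x z + ip y z) \<and>
     (\<forall>a x y. ip (sc a x) y = a * ip x y) \<and>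
     (\<forall>x y. ip x y = cnj (ip y x)) \<and>
     (\<forall>x. Im (ip x x) = 0 \<and> Re (ip x x) \<ge> 0) \<and>
     (\<forall>x. ip x x = 0 \<longrightarrow> x = 0) \<and>
     (\<forall>X :: nat \<Rightarrow> 'h.
        (\<forall>\<epsilon>>0. \<exists>N. \<forall>m\<ge>N. \<forall>n\<ge>N. hnorm ip (X m - X n) < \<epsilon>) \<longrightarrow>
        (\<exists>y. \<forall>\<epsilon>>0. \<exists>N. \<forall>n\<ge>N. hnorm ip (X n - y) < \<epsilon>))"

definition orthonormal_basis ::
  "('h::ab_group_add \<Rightarrow> 'h \<Rightarrow> complex) \<Rightarrow> 'i set \<Rightarrow> ('i \<Rightarrow> 'h) \<Rightarrow> bool" where
  "orthonormal_basis ip I e \<longleftrightarrow>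
     (\<forall>i\<in>I. \<forall>j\<in>I. ip (e i) (e j) = (if i = j then 1 else 0)) \<and>
     (\<forall>x. (\<forall>i\<in>I. ip x (e i) = 0) \<longrightarrow> x = 0)"

definition bounded_op ::
  "(complex \<Rightarrow> 'h::ab_group_add \<Rightarrow> 'h) \<Rightarrow> ('h \<Rightarrow> 'h \<Rightarrow> complex) \<Rightarrow> ('h \<Rightarrow> 'h) \<Rightarrow> bool" where
  "bounded_op sc ip T \<longleftrightarrow>
     (\<forall>x y. T (x + y) = T x + T y) \<and> (\<forall>a x. T (sc a x) = sc a (T x)) \<and>
     (\<exists>C. \<forall>x. hnorm ip (T x) \<le> C * hnorm ip x)"

definition is_adjoint :: "('h \<Rightarrow> 'h \<Rightarrow> complex) \<Rightarrow> ('h \<Rightarrow> 'h) \<Rightarrow> ('h \<Rightarrow> 'h) \<Rightarrow> bool" where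
  "is_adjoint ip T Ts \<longleftrightarrow> (\<forall>x y. ip (T x) y = ip x (Ts y))"

definition partial_isometry ::
  "(complex \<Rightarrow> 'h::ab_group_add \<Rightarrow> 'h) \<Rightarrow> ('h \<Rightarrow> 'h \<Rightarrow> complex) \<Rightarrow> ('h \<Rightarrow> 'h) \<Rightarrow> ('h \<Rightarrow> 'h) \<Rightarrow> bool" where
  "partial_isometry sc ip T Ts \<longleftrightarrow>
     bounded_op sc ip T \<and> is_adjoint ip T Ts \<and> (\<forall>x. T (Ts (T x)) = T x)"

text \<open>t lam is the operator t_lambda and ta lam its adjoint t_lambda^*;
t_v is t (ident v).\<close>

definition ck_rep ::
  "'v set \<Rightarrow> 'a set \<Rightarrow> ('a \<Rightarrow> 'v) \<Rightarrow> ('a \<Rightarrow> 'v) \<Rightarrow> ('v \<Rightarrow> 'a) \<Rightarrow> ('a \<Rightarrow> 'a \<Rightarrow> 'a)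
   \<Rightarrow> ('a \<Rightarrow> ('k::finite \<Rightarrow> nat))
   \<Rightarrow> (complex \<Rightarrow> 'h::ab_group_add \<Rightarrow> 'h) \<Rightarrow> ('h \<Rightarrow> 'h \<Rightarrow> complex)
   \<Rightarrow> ('a \<Rightarrow> 'h \<Rightarrow> 'h) \<Rightarrow> ('a \<Rightarrow> 'h \<Rightarrow> 'h) \<Rightarrow> bool" where
  "ck_rep V L r s ident cmp d sc ip t ta \<longleftrightarrow>
     (\<forall>lam\<in>L. partial_isometry sc ip (t lam) (ta lam)) \<and>
     \<comment> \<open>(CK1)\<close>
     (\<forall>v\<in>V. (\<forall>x. t (ident v) (t (ident v) x) = t (ident v) x) \<and> ta (ident v) = t (ident v)) \<and>
     (\<forall>v\<in>V. \<forall>w\<in>V. v \<noteq> w \<longrightarrow> (\<forall>x. t (ident v) (t (ident w) x) = 0)) \<and>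
     \<comment> \<open>(CK2)\<close>
     (\<forall>lam\<in>L. \<forall>eta\<in>L. s lam = r eta \<longrightarrow> (\<forall>x. t lam (t eta x) = t (cmp lam eta) x)) \<and>
     \<comment> \<open>(CK3)\<close>
     (\<forall>lam\<in>L. \<forall>x. ta lam (t lam x) = t (ident (s lam)) x) \<and>
     \<comment> \<open>(CK4)\<close>
     (\<forall>v\<in>V. \<forall>n. \<forall>x. t (ident v) x = (\<Sum>lam\<in>{lam\<in>L. r lam = v \<and> d lam = n}. t lam (ta lam x)))"

definition permutative ::
  "'a set \<Rightarrow> ('a \<Rightarrow> 'v) \<Rightarrow> ('a \<Rightarrow> 'v) \<Rightarrow> ('a \<Rightarrow> 'a \<Rightarrow> 'a) \<Rightarrow> ('a \<Rightarrow> ('k::finite \<Rightarrow> nat))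
   \<Rightarrow> ('h::ab_group_add \<Rightarrow> 'h \<Rightarrow> complex)
   \<Rightarrow> ('a \<Rightarrow> 'h \<Rightarrow> 'h) \<Rightarrow> ('a \<Rightarrow> 'h \<Rightarrow> 'h)
   \<Rightarrow> 'i set \<Rightarrow> ('i \<Rightarrow> 'h) \<Rightarrow> ('a \<Rightarrow> 'i set) \<Rightarrow> ('a \<Rightarrow> 'i set) \<Rightarrow> ('a \<Rightarrow> 'i \<Rightarrow> 'i) \<Rightarrow> bool" where
  "permutative L r s cmp d ip t ta I e J K sig \<longleftrightarrow>
     orthonormal_basis ip I e \<and>
     (\<forall>lam\<in>L. J lam \<subseteq> I \<and> K lam \<subseteq> I \<and> bij_betw (sig lam) (J lam) (K lam)) \<and>
     \<comment> \<open>(a)\<close>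
     (\<forall>n. (\<Union>lam\<in>{lam\<in>L. d lam = n}. J lam) = I \<and> (\<Union>lam\<in>{lam\<in>L. d lam = n}. K lam) = I) \<and>
     \<comment> \<open>(b): sig lam o sig nu = sig (lam nu) as partial maps\<close>
     (\<forall>lam\<in>L. \<forall>nu\<in>L. s lam = r nu \<longrightarrow>
         K nu \<subseteq> J lam \<and> J (cmp lam nu) = J nu \<and>
         (\<forall>i\<in>J nu. sig lam (sig nu i) = sig (cmp lam nu) i)) \<and>
     \<comment> \<open>(c)\<close>
     (\<forall>lam\<in>L. (\<forall>i\<in>J lam. t lam (e i) = e (sig lam i)) \<and> (\<forall>i\<in>I - J lam. t lam (e i) = 0)) \<and>
     \<comment> \<open>(d)\<close>
     (\<forall>lam\<in>L. (\<forall>i\<in>J lam. ta lam (e (sig lam i)) = e i) \<and>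
        (\<forall>lam'\<in>L. lam' \<noteq> lam \<and> d lam' = d lam \<longrightarrow> (\<forall>j\<in>K lam'. ta lam (e j) = 0)))"

definition encoding ::
  "'a set \<Rightarrow> ('a \<Rightarrow> 'v) \<Rightarrow> ('a \<Rightarrow> 'v) \<Rightarrow> ('v \<Rightarrow> 'a) \<Rightarrow> ('a \<Rightarrow> 'a \<Rightarrow> 'a)
   \<Rightarrow> ('a \<Rightarrow> ('k::finite \<Rightarrow> nat)) \<Rightarrow> ('a \<Rightarrow> 'i set) \<Rightarrow> 'i
   \<Rightarrow> (('k \<Rightarrow> nat) \<Rightarrow> ('k \<Rightarrow> nat) \<Rightarrow> 'a)" where
  "encoding L r s ident cmp d K i =
    (THE x. x \<in> inf_paths L r s ident cmp d \<and>
       (\<forall>n. x (\<lambda>_. 0) n = (THE lam. lam \<in> L \<and> d lam = n \<and> i \<in> K lam)))"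

definition coding ::
  "'a set \<Rightarrow> ('a \<Rightarrow> ('k::finite \<Rightarrow> nat)) \<Rightarrow> ('a \<Rightarrow> 'i set) \<Rightarrow> ('a \<Rightarrow> 'i set) \<Rightarrow> ('a \<Rightarrow> 'i \<Rightarrow> 'i)
   \<Rightarrow> ('k \<Rightarrow> nat) \<Rightarrow> 'i \<Rightarrow> 'i" where
  "coding L d J K sig n i =
    (let lam = (THE lam. lam \<in> L \<and> d lam = n \<and> i \<in> K lam) in
       THE i'. i' \<in> J lam \<and> sig lam i' = i)"

end

theory Submission imports Defs begin

locale kp =
  fixes V :: "'v set" and L :: "'a set" and r s :: "'a \<Rightarrow> 'v" and ident :: "'v \<Rightarrow> 'a"
    and cmp :: "'a \<Rightarrow> 'a \<Rightarrow> 'a" and d :: "'a \<Rightarrow> ('k::finite \<Rightarrow> nat)"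
    and ip :: "'h::ab_group_add \<Rightarrow> 'h \<Rightarrow> complex"
    and t ta :: "'a \<Rightarrow> 'h \<Rightarrow> 'h"
    and I :: "'i set" and e :: "'i \<Rightarrow> 'h" and J K :: "'a \<Rightarrow> 'i set" and sig :: "'a \<Rightarrow> 'i \<Rightarrow> 'i"
  assumes kg: "kgraph V L r s ident cmp d"
    and pm: "permutative L r s cmp d ip t ta I e J K sig"
    and ip0: "ip 0 0 = 0"
begin

lemma rs: "lam \<in> L \<Longrightarrow> r lam \<in> V \<and> s lam \<in> V"
  using kg[unfolded kgraph_def, THEN conjunct2, THEN conjunct2, THEN conjunct1] by blast
lemma idL: "v \<in> V \<Longrightarrow> ident v \<in> L \<and> r (ident v) = v \<and> s (ident v) = v \<and> d (ident v) = (\<lambda>_. 0)"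
  using kg[unfolded kgraph_def, THEN conjunct2, THEN conjunct2, THEN conjunct2, THEN conjunct1] kg[unfolded kgraph_def, THEN conjunct2, THEN conjunct2, THEN conjunct2, THEN conjunct2, THEN conjunct2, THEN conjunct2, THEN conjunct2, THEN conjunct1] by blast
lemma idcmp: "lam \<in> L \<Longrightarrow> cmp (ident (r lam)) lam = lam \<and> cmp lam (ident (s lam)) = lam"
  using kg[unfolded kgraph_def, THEN conjunct2, THEN conjunct2, THEN conjunct2, THEN conjunct2, THEN conjunct1] by blast
lemma cmpL: "lam \<in> L \<Longrightarrow> mu \<in> L \<Longrightarrow> s lam = r mu \<Longrightarrow>
   cmp lam mu \<in> L \<and> r (cmp lam mu) = r lam \<and> s (cmp lam mu) = s mu \<and> d (cmp lam mu) = (\<lambda>j. d lam j + d mu j)"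
  using kg[unfolded kgraph_def, THEN conjunct2, THEN conjunct2, THEN conjunct2, THEN conjunct2, THEN conjunct2, THEN conjunct1] kg[unfolded kgraph_def, THEN conjunct2, THEN conjunct2, THEN conjunct2, THEN conjunct2, THEN conjunct2, THEN conjunct2, THEN conjunct2, THEN conjunct2, THEN conjunct1] by blast
lemma assoc: "lam \<in> L \<Longrightarrow> mu \<in> L \<Longrightarrow> nu \<in> L \<Longrightarrow> s lam = r mu \<Longrightarrow> s mu = r nu \<Longrightarrow>
         cmp (cmp lam mu) nu = cmp lam (cmp mu nu)"
  using kg[unfolded kgraph_def, THEN conjunct2, THEN conjunct2, THEN conjunct2, THEN conjunct2, THEN conjunct2, THEN conjunct2, THEN conjunct1] by blast
lemma fac_ex: "lam \<in> L \<Longrightarrow> d lam = (\<lambda>j. m j + n j) \<Longrightarrow>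
   \<exists>mu nu. mu \<in> L \<and> nu \<in> L \<and> s mu = r nu \<and> lam = cmp mu nu \<and> d mu = m \<and> d nu = n"
  using kg[unfolded kgraph_def, THEN conjunct2, THEN conjunct2, THEN conjunct2, THEN conjunct2, THEN conjunct2, THEN conjunct2, THEN conjunct2, THEN conjunct2, THEN conjunct2] by blast
lemma fac_uniq:
  assumes "mu \<in> L" "nu \<in> L" "mu' \<in> L" "nu' \<in> L" "s mu = r nu" "s mu' = r nu'"
    "cmp mu nu = cmp mu' nu'" "d mu = d mu'" "d nu = d nu'"
  shows "mu = mu' \<and> nu = nu'"
proof -
  let ?lam = "cmp mu nu"
  have L: "?lam \<in> L" and dl: "d ?lam = (\<lambda>j. d mu j + d nu j)" using cmpL assms by auto
  have "\<forall>lam\<in>L. \<forall>m n. d lam = (\<lambda>j. m j + n j) \<longrightarrow>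
         (\<exists>mu nu. mu \<in> L \<and> nu \<in> L \<and> s mu = r nu \<and> lam = cmp mu nu \<and> d mu = m \<and> d nu = n \<and>
            (\<forall>mu' nu'. mu' \<in> L \<and> nu' \<in> L \<and> s mu' = r nu' \<and> lam = cmp mu' nu' \<and>
                 d mu' = m \<and> d nu' = n \<longrightarrow> mu' = mu \<and> nu' = nu))"
    using kg[unfolded kgraph_def, THEN conjunct2, THEN conjunct2, THEN conjunct2, THEN conjunct2, THEN conjunct2, THEN conjunct2, THEN conjunct2, THEN conjunct2, THEN conjunct2] by blast
  then obtain a b where ab: "\<forall>mu' nu'. mu' \<in> L \<and> nu' \<in> L \<and> s mu' = r nu' \<and> ?lam = cmp mu' nu' \<and>
                 d mu' = d mu \<and> d nu' = d nu \<longrightarrow> mu' = a \<and> nu' = b"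
    using L dl by blast
  show ?thesis using ab[rule_format, of mu nu] ab[rule_format, of mu' nu'] assms by auto
qed

lemma ortho: "orthonormal_basis ip I e" using pm[unfolded permutative_def, THEN conjunct1] by blast
lemma JKI: "lam \<in> L \<Longrightarrow> J lam \<subseteq> I \<and> K lam \<subseteq> I \<and> bij_betw (sig lam) (J lam) (K lam)"
  using pm[unfolded permutative_def, THEN conjunct2, THEN conjunct1] by blast
lemma KU: "(\<Union>lam\<in>{lam\<in>L. d lam = n}. K lam) = I"
  using pm[unfolded permutative_def, THEN conjunct2, THEN conjunct2, THEN conjunct1] by blast
lemma pb: "lam \<in> L \<Longrightarrow> nu \<in> L \<Longrightarrow> s lam = r nu \<Longrightarrow>
         K nu \<subseteq> J lam \<and> J (cmp lam nu) = J nu \<and>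
         (\<forall>i\<in>J nu. sig lam (sig nu i) = sig (cmp lam nu) i)"
  using pm[unfolded permutative_def, THEN conjunct2, THEN conjunct2, THEN conjunct2, THEN conjunct1] by blast
lemma pd: "lam \<in> L \<Longrightarrow> (\<forall>i\<in>J lam. ta lam (e (sig lam i)) = e i) \<and>
        (\<forall>lam'\<in>L. lam' \<noteq> lam \<and> d lam' = d lam \<longrightarrow> (\<forall>j\<in>K lam'. ta lam (e j) = 0))"
  using pm[unfolded permutative_def, THEN conjunct2, THEN conjunct2, THEN conjunct2, THEN conjunct2, THEN conjunct2] by blast

lemma K_disj:
  assumes "lam \<in> L" "lam' \<in> L" "d lam = d lam'" "i \<in> K lam" "i \<in> K lam'"
  shows "lam = lam'"
proof (rule ccontr)
  assume ne: "lam \<noteq> lam'"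
  from JKI[OF assms(1)] assms(4) obtain a where a: "a \<in> J lam" "sig lam a = i"
    by (metis bij_betw_def imageE)
  have "ta lam (e i) = e a" using pd[OF assms(1)] a by auto
  moreover have "ta lam (e i) = 0" using pd[OF assms(1)] assms ne by auto
  ultimately have "e a = 0" by simp
  moreover have "a \<in> I" using JKI[OF assms(1)] a by auto
  ultimately have "ip 0 0 = 1" using ortho unfolding orthonormal_basis_def by force
  with ip0 show False by simp
qed

definition pick where "pick n i = (THE lam. lam \<in> L \<and> d lam = n \<and> i \<in> K lam)"

lemma pick_eq: "lam \<in> L \<Longrightarrow> d lam = n \<Longrightarrow> i \<in> K lam \<Longrightarrow> pick n i = lam"
  unfolding pick_def by (rule the_equality) (auto intro: K_disj)

lemma pick: assumes "i \<in> I" shows "pick n i \<in> L \<and> d (pick n i) = n \<and> i \<in> K (pick n i)"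
proof -
  from KU[of n] assms obtain lam where "lam \<in> L" "d lam = n" "i \<in> K lam" by blast
  then show ?thesis using pick_eq by simp
qed

lemma K_cmp: assumes "lam \<in> L" "nu \<in> L" "s lam = r nu"
  shows "K (cmp lam nu) = sig lam ` K nu"
proof -
  have cL: "cmp lam nu \<in> L" using cmpL assms by auto
  have "K (cmp lam nu) = sig (cmp lam nu) ` J (cmp lam nu)"
    using JKI[OF cL] by (simp add: bij_betw_def)
  also have "\<dots> = sig (cmp lam nu) ` J nu" using pb[OF assms] by simp
  also have "\<dots> = sig lam ` (sig nu ` J nu)" using pb[OF assms] by (force simp: image_image)
  also have "\<dots> = sig lam ` K nu" using JKI[OF assms(2)] by (simp add: bij_betw_def)
  finally show ?thesis .
qed


abbreviation "P \<equiv> inf_paths L r s ident cmp d"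

lemma path: "x \<in> P \<Longrightarrow> p \<le> q \<Longrightarrow> x p q \<in> L \<and> d (x p q) = (\<lambda>j. q j - p j)"
  unfolding inf_paths_def by blast
lemma path_cmp: "x \<in> P \<Longrightarrow> p \<le> q \<Longrightarrow> q \<le> w \<Longrightarrow> s (x p q) = r (x q w) \<and> x p w = cmp (x p q) (x q w)"
  unfolding inf_paths_def by blast
lemma path_und: "x \<in> P \<Longrightarrow> \<not> p \<le> q \<Longrightarrow> x p q = undefined"
  unfolding inf_paths_def by blast
lemma zle: "(\<lambda>_. 0::nat) \<le> p" by (simp add: le_fun_def)

lemma path_ext:
  assumes x: "x \<in> P" and y: "y \<in> P" and eq: "\<And>n. x (\<lambda>_. 0) n = y (\<lambda>_. 0) n"
  shows "x = y"
proof (intro ext)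
  fix p q
  show "x p q = y p q"
  proof (cases "p \<le> q")
    case True
    have a: "x (\<lambda>_. 0) q = cmp (x (\<lambda>_. 0) p) (x p q)" "s (x (\<lambda>_. 0) p) = r (x p q)"
      using path_cmp[OF x zle True] by auto
    have b: "y (\<lambda>_. 0) q = cmp (y (\<lambda>_. 0) p) (y p q)" "s (y (\<lambda>_. 0) p) = r (y p q)"
      using path_cmp[OF y zle True] by auto
    show ?thesis
      using fac_uniq[of "x (\<lambda>_. 0) p" "x p q" "y (\<lambda>_. 0) p" "y p q"] a b eq[of p] eq[of q]
        path[OF x zle] path[OF y zle] path[OF x True] path[OF y True] by auto
  next
    case False
    then show ?thesis using path_und x y by metis
  qed
qed

lemma shift_P: assumes x: "x \<in> P" shows "path_shift m x \<in> P"
proof -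
  have le: "p \<le> q \<Longrightarrow> (\<lambda>j. p j + m j) \<le> (\<lambda>j. q j + m j)" for p q :: "'k \<Rightarrow> nat"
    by (simp add: le_fun_def)
  show ?thesis
    unfolding inf_paths_def mem_Collect_eq
  proof (intro conjI allI impI)
    fix p q :: "'k \<Rightarrow> nat" assume pq: "p \<le> q"
    show "path_shift m x p q \<in> L" using path[OF x le[OF pq]] pq by (simp add: path_shift_def)
    show "d (path_shift m x p q) = (\<lambda>j. q j - p j)" using path[OF x le[OF pq]] pq by (simp add: path_shift_def)
  next
    fix p :: "'k \<Rightarrow> nat"
    show "path_shift m x p p = ident (r (path_shift m x p p))"
      using x unfolding path_shift_def inf_paths_def by simp
  next
    fix p q w :: "'k \<Rightarrow> nat" assume "p \<le> q \<and> q \<le> w"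
    then have pq: "p \<le> q" and qw: "q \<le> w" and pw: "p \<le> w" by auto
    show "s (path_shift m x p q) = r (path_shift m x q w)"
      "path_shift m x p w = cmp (path_shift m x p q) (path_shift m x q w)"
      using path_cmp[OF x le[OF pq] le[OF qw]] pq qw pw by (simp_all add: path_shift_def)
  next
    fix p q :: "'k \<Rightarrow> nat" assume "\<not> p \<le> q"
    then show "path_shift m x p q = undefined" by (simp add: path_shift_def)
  qed
qed

lemma prefix_ex:
  assumes i: "i \<in> I" and pq: "p \<le> q"
  shows "\<exists>nu\<in>L. s (pick p i) = r nu \<and> pick q i = cmp (pick p i) nu \<and> d nu = (\<lambda>j. q j - p j)"
proof -
  have pq': "\<And>j. p j \<le> q j" using pq by (simp add: le_fun_def)
  have "d (pick q i) = (\<lambda>j. p j + (q j - p j))" using pick[OF i] pq' by (simp add: add_diff_inverse_nat not_le)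
  then obtain mu nu where mn: "mu \<in> L" "nu \<in> L" "s mu = r nu" "pick q i = cmp mu nu" "d mu = p"
     "d nu = (\<lambda>j. q j - p j)"
    using fac_ex[of "pick q i" p "\<lambda>j. q j - p j"] pick[OF i] by blast
  have "i \<in> sig mu ` K nu" using K_cmp[OF mn(1-3)] mn(4) pick[OF i, of q] by simp
  also have "\<dots> \<subseteq> sig mu ` J mu" using pb[OF mn(1-3)] by blast
  also have "\<dots> = K mu" using JKI[OF mn(1)] by (simp add: bij_betw_def)
  finally have "pick p i = mu" using pick_eq mn by blast
  then show ?thesis using mn by blast
qed


lemma enc_ex:
  assumes i: "i \<in> I"
  shows "\<exists>x\<in>P. \<forall>n. x (\<lambda>_. 0) n = pick n i"
proof -
  define Q where "Q p q nu \<longleftrightarrow> nu \<in> L \<and> s (pick p i) = r nu \<and> pick q i = cmp (pick p i) nu \<and> d nu = (\<lambda>j. q j - p j)"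
    for p q :: "'k \<Rightarrow> nat" and nu
  define x where "x p q = (if p \<le> q then THE nu. Q p q nu else undefined)" for p q
  have uq: "Q p q nu \<Longrightarrow> Q p q nu' \<Longrightarrow> nu = nu'" for p q nu nu'
    using fac_uniq[of "pick p i" nu "pick p i" nu'] pick[OF i] unfolding Q_def by metis
  have xQ: "p \<le> q \<Longrightarrow> Q p q (x p q)" for p q
  proof -
    assume pq: "p \<le> q"
    then have "\<exists>!nu. Q p q nu" using prefix_ex[OF i pq] uq unfolding Q_def by blast
    then show ?thesis using pq unfolding x_def by (simp add: theI')
  qed
  have x0: "x (\<lambda>_. 0) n = pick n i" for n
  proof -
    have q: "Q (\<lambda>_. 0) n (x (\<lambda>_. 0) n)" using xQ zle by blast
    have pn: "pick n i \<in> L" "d (pick n i) = n" using pick[OF i] by auto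
    have v: "r (pick n i) \<in> V" using rs pn by blast
    have "cmp (ident (r (pick n i))) (pick n i) = pick n i" using idcmp pn by blast
    then have e1: "cmp (pick (\<lambda>_. 0) i) (x (\<lambda>_. 0) n) = cmp (ident (r (pick n i))) (pick n i)"
      using q unfolding Q_def by metis
    have p0: "pick (\<lambda>_. 0) i \<in> L" "d (pick (\<lambda>_. 0) i) = (\<lambda>_. 0)" using pick[OF i] by auto
    have q': "x (\<lambda>_. 0) n \<in> L" "s (pick (\<lambda>_. 0) i) = r (x (\<lambda>_. 0) n)"
       "d (x (\<lambda>_. 0) n) = n" using q unfolding Q_def by auto
    have iv: "ident (r (pick n i)) \<in> L" "s (ident (r (pick n i))) = r (pick n i)"
       "d (ident (r (pick n i))) = (\<lambda>_. 0)" using idL[OF v] by auto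
    show ?thesis
      using fac_uniq[OF p0(1) q'(1) iv(1) pn(1) q'(2) iv(2) e1] p0(2) iv(3) q'(3) pn(2) by simp
  qed
  have "x \<in> P"
    unfolding inf_paths_def mem_Collect_eq
  proof (intro conjI allI impI)
    fix p q :: "'k \<Rightarrow> nat" assume pq: "p \<le> q"
    show "x p q \<in> L" "d (x p q) = (\<lambda>j. q j - p j)" using xQ[OF pq] unfolding Q_def by auto
  next
    fix p :: "'k \<Rightarrow> nat"
    have q: "Q p p (x p p)" using xQ by blast
    have pn: "pick p i \<in> L" "d (pick p i) = p" using pick[OF i] by auto
    have v: "s (pick p i) \<in> V" using rs pn by blast
    have "cmp (pick p i) (ident (s (pick p i))) = pick p i" using idcmp pn by blast
    then have "x p p = ident (s (pick p i))"
      using fac_uniq[of "pick p i" "x p p" "pick p i" "ident (s (pick p i))"]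
        q idL[OF v] pn unfolding Q_def by auto
    then show "x p p = ident (r (x p p))" using idL[OF v] by simp
  next
    fix p q w :: "'k \<Rightarrow> nat" assume "p \<le> q \<and> q \<le> w"
    then have pq: "p \<le> q" and qw: "q \<le> w" and pw: "p \<le> w" by auto
    have a: "Q p q (x p q)" "Q q w (x q w)" "Q p w (x p w)" using xQ pq qw pw by auto
    have pp: "pick p i \<in> L" using pick[OF i] by auto
    have sr: "s (x p q) = r (x q w)"
      using a cmpL[of "pick p i" "x p q"] pp unfolding Q_def by metis
    then show "s (x p q) = r (x q w)" .
    have c: "cmp (x p q) (x q w) \<in> L" "r (cmp (x p q) (x q w)) = r (x p q)"
       "d (cmp (x p q) (x q w)) = (\<lambda>j. x_d j)" if "x_d = (\<lambda>j. q j - p j + (w j - q j))" for x_d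
      using cmpL[of "x p q" "x q w"] a sr that unfolding Q_def by auto
    have dd: "(\<lambda>j. q j - p j + (w j - q j)) = (\<lambda>j. w j - p j)"
      using pq qw by (auto simp: le_fun_def intro!: ext)
    have "pick w i = cmp (cmp (pick p i) (x p q)) (x q w)" using a unfolding Q_def by metis
    also have "\<dots> = cmp (pick p i) (cmp (x p q) (x q w))"
      using assoc[of "pick p i" "x p q" "x q w"] a pp sr unfolding Q_def by metis
    finally have "pick w i = cmp (pick p i) (cmp (x p q) (x q w))" .
    then show "x p w = cmp (x p q) (x q w)"
      using fac_uniq[of "pick p i" "x p w" "pick p i" "cmp (x p q) (x q w)"] a pp c[OF refl] dd
      unfolding Q_def by auto
  next
    fix p q :: "'k \<Rightarrow> nat" assume "\<not> p \<le> q"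
    then show "x p q = undefined" by (simp add: x_def)
  qed
  then show ?thesis using x0 by blast
qed

abbreviation "E \<equiv> encoding L r s ident cmp d K"

lemma enc: assumes i: "i \<in> I" shows "E i \<in> P \<and> (\<forall>n. E i (\<lambda>_. 0) n = pick n i)"
proof -
  obtain x where x: "x \<in> P" "\<forall>n. x (\<lambda>_. 0) n = pick n i" using enc_ex[OF i] by blast
  have "\<exists>!x. x \<in> P \<and> (\<forall>n. x (\<lambda>_. 0) n = pick n i)"
  proof (rule ex1I[of _ x])
    show "x \<in> P \<and> (\<forall>n. x (\<lambda>_. 0) n = pick n i)" using x by blast
    fix y assume "y \<in> P \<and> (\<forall>n. y (\<lambda>_. 0) n = pick n i)"
    then show "y = x" using path_ext[of y x] x by simp
  qed
  then show ?thesis unfolding encoding_def pick_def[symmetric] by (rule theI')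
qed


lemma key:
  assumes lam: "lam \<in> L" and i: "i \<in> J lam"
  shows "E (sig lam i) (\<lambda>_. 0) (d lam) = lam \<and> path_shift (d lam) (E (sig lam i)) = E i"
proof -
  let ?j = "sig lam i"
  have jK: "?j \<in> K lam" using JKI[OF lam] i by (auto simp: bij_betw_def)
  have jI: "?j \<in> I" and iI: "i \<in> I" using JKI[OF lam] i jK by auto
  have Ej: "E ?j \<in> P" "\<And>n. E ?j (\<lambda>_. 0) n = pick n ?j" using enc[OF jI] by auto
  have Ei: "E i \<in> P" "\<And>n. E i (\<lambda>_. 0) n = pick n i" using enc[OF iI] by auto
  have 1: "E ?j (\<lambda>_. 0) (d lam) = lam" using Ej(2) pick_eq[OF lam refl jK] by simp
  let ?y = "path_shift (d lam) (E ?j)"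
  have "?y (\<lambda>_. 0) n = E i (\<lambda>_. 0) n" for n
  proof -
    let ?w = "\<lambda>k. n k + d lam k"
    have le1: "(\<lambda>_. 0) \<le> d lam" and le2: "d lam \<le> ?w" by (auto simp: le_fun_def)
    have yv: "?y (\<lambda>_. 0) n = E ?j (d lam) ?w" by (simp add: path_shift_def zle)
    let ?nu = "E ?j (d lam) ?w"
    have c: "s lam = r ?nu" "E ?j (\<lambda>_. 0) ?w = cmp lam ?nu"
      using path_cmp[OF Ej(1) le1 le2] 1 by auto
    have nu: "?nu \<in> L" "d ?nu = n" using path[OF Ej(1) le2] by auto
    have "?j \<in> K (cmp lam ?nu)" using c(2) Ej(2)[of ?w] pick[OF jI, of ?w] by simp
    then obtain i' where i': "i' \<in> K ?nu" "?j = sig lam i'" using K_cmp[OF lam nu(1) c(1)] by auto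
    have "i' \<in> J lam" using pb[OF lam nu(1) c(1)] i' by auto
    moreover have "inj_on (sig lam) (J lam)" using JKI[OF lam] by (simp add: bij_betw_def)
    ultimately have "i' = i" using i i'(2) by (metis inj_onD)
    then have "i \<in> K ?nu" using i'(1) by blast
    then have "pick n i = ?nu" by (rule pick_eq[OF nu(1) nu(2)])
    then show ?thesis using yv Ei(2) by simp
  qed
  then have "?y = E i" using path_ext[OF shift_P[OF Ej(1)] Ei(1)] by blast
  then show ?thesis using 1 by simp
qed

lemma prefix_eq:
  assumes lam: "lam \<in> L" and i: "i \<in> J lam"
  shows "path_prefix L r s ident cmp d lam (E i) = E (sig lam i)"
proof -
  let ?j = "sig lam i"
  have jK: "?j \<in> K lam" using JKI[OF lam] i by (auto simp: bij_betw_def)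
  have jI: "?j \<in> I" using JKI[OF lam] jK by auto
  have Ej: "E ?j \<in> P" using enc[OF jI] by auto
  have un: "y = y'" if y: "y \<in> P" "y (\<lambda>_. 0) (d lam) = lam" "path_shift (d lam) y = E i"
    and y': "y' \<in> P" "y' (\<lambda>_. 0) (d lam) = lam" "path_shift (d lam) y' = E i" for y y'
  proof (rule path_ext[OF y(1) y'(1)])
    fix n
    let ?w = "\<lambda>k. n k + d lam k"
    have le1: "(\<lambda>_. 0) \<le> d lam" and le2: "d lam \<le> ?w" and le3: "n \<le> ?w" by (auto simp: le_fun_def)
    have "y (d lam) ?w = path_shift (d lam) y (\<lambda>_. 0) n" by (simp add: path_shift_def zle)
    moreover have "y' (d lam) ?w = path_shift (d lam) y' (\<lambda>_. 0) n" by (simp add: path_shift_def zle)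
    ultimately have eqm: "y (d lam) ?w = y' (d lam) ?w" using y y' by simp
    have "y (\<lambda>_. 0) ?w = y' (\<lambda>_. 0) ?w"
      using path_cmp[OF y(1) le1 le2] path_cmp[OF y'(1) le1 le2] y y' eqm by simp
    moreover have "y (\<lambda>_. 0) ?w = cmp (y (\<lambda>_. 0) n) (y n ?w)" "s (y (\<lambda>_. 0) n) = r (y n ?w)"
      using path_cmp[OF y(1) zle le3] by auto
    moreover have "y' (\<lambda>_. 0) ?w = cmp (y' (\<lambda>_. 0) n) (y' n ?w)" "s (y' (\<lambda>_. 0) n) = r (y' n ?w)"
      using path_cmp[OF y'(1) zle le3] by auto
    ultimately show "y (\<lambda>_. 0) n = y' (\<lambda>_. 0) n"
      using fac_uniq[of "y (\<lambda>_. 0) n" "y n ?w" "y' (\<lambda>_. 0) n" "y' n ?w"]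
        path[OF y(1) zle] path[OF y'(1) zle] path[OF y(1) le3] path[OF y'(1) le3] by auto
  qed
  show ?thesis unfolding path_prefix_def
    by (rule the_equality) (use key[OF lam i] Ej un in auto)
qed

end

theorem corollary4p4:
  fixes V :: "'v set" and L :: "'a set" and r s :: "'a \<Rightarrow> 'v" and ident :: "'v \<Rightarrow> 'a"
    and cmp :: "'a \<Rightarrow> 'a \<Rightarrow> 'a" and d :: "'a \<Rightarrow> ('k::finite \<Rightarrow> nat)"
    and sc :: "complex \<Rightarrow> 'h::ab_group_add \<Rightarrow> 'h" and ip :: "'h \<Rightarrow> 'h \<Rightarrow> complex"
    and t ta :: "'a \<Rightarrow> 'h \<Rightarrow> 'h"
    and I :: "'i set" and e :: "'i \<Rightarrow> 'h" and J K :: "'a \<Rightarrow> 'i set" and sig :: "'a \<Rightarrow> 'i \<Rightarrow> 'i"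
  assumes "kgraph V L r s ident cmp d"
    and "row_finite V L r d"
    and "no_sources V L r d"
    and "complex_hilbert_space sc ip"
    and "ck_rep V L r s ident cmp d sc ip t ta"
    and "permutative L r s cmp d ip t ta I e J K sig"
    and "inj_on (encoding L r s ident cmp d K) I"
  shows "(\<forall>lam\<in>L. \<forall>i\<in>J lam.
            inv_into I (encoding L r s ident cmp d K)
              (path_prefix L r s ident cmp d lam (encoding L r s ident cmp d K i)) = sig lam i) \<and>
         (\<forall>n. \<forall>i\<in>I.
            inv_into I (encoding L r s ident cmp d K)
              (path_shift n (encoding L r s ident cmp d K i)) = coding L d J K sig n i)"
proof -
  have "ip (0 + 0) 0 = ip 0 0 + ip 0 0" using assms(4) unfolding complex_hilbert_space_def by blast
  then have ip0: "ip 0 0 = 0" by simp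
  interpret kp V L r s ident cmp d ip t ta I e J K sig
    using assms(1,6) ip0 by unfold_locales
  show ?thesis
  proof (intro conjI ballI allI)
    fix lam i assume lam: "lam \<in> L" and i: "i \<in> J lam"
    have "sig lam i \<in> I" using JKI[OF lam] i by (auto simp: bij_betw_def)
    then show "inv_into I E (path_prefix L r s ident cmp d lam (E i)) = sig lam i"
      using prefix_eq[OF lam i] inv_into_f_f[OF assms(7)] by simp
  next
    fix n i assume i: "i \<in> I"
    let ?lam = "pick n i"
    have pl: "?lam \<in> L" "d ?lam = n" "i \<in> K ?lam" using pick[OF i] by auto
    have bj: "bij_betw (sig ?lam) (J ?lam) (K ?lam)" using JKI[OF pl(1)] by blast
    have "i \<in> sig ?lam ` J ?lam" using bj pl(3) by (simp add: bij_betw_def)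
    then obtain i' where i': "i' \<in> J ?lam" "sig ?lam i' = i" by (elim imageE) simp
    have inj: "inj_on (sig ?lam) (J ?lam)" using bj by (simp add: bij_betw_def)
    have "coding L d J K sig n i = i'"
      unfolding coding_def Let_def pick_def[symmetric]
    proof (rule the_equality)
      show "i' \<in> J ?lam \<and> sig ?lam i' = i" using i' by blast
      fix i'' assume "i'' \<in> J ?lam \<and> sig ?lam i'' = i"
      then show "i'' = i'" using i' inj_onD[OF inj] by metis
    qed
    moreover have "path_shift n (E i) = E i'"
    proof -
      have "path_shift (d ?lam) (E (sig ?lam i')) = E i'" using key[OF pl(1) i'(1)] by blast
      then show ?thesis using i'(2) pl(2) by simp
    qed
    moreover have "i' \<in> I" using JKI[OF pl(1)] i' by auto
    ultimately show "inv_into I E (path_shift n (E i)) = coding L d J K sig n i"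
      using inv_into_f_f[OF assms(7)] by simp
  qed
qed

end
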